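(* Fix $y_0\in Y$ and suppose an optimal solution $(\bar\psi,\bar\eta)$ of the dual problem exists. Let $(y(\cdot),u(\cdot))$ be an admissible process on $\{0,1,\dots\}$ with $y(0)=y_0$, and suppose that for all $t=0,1,\dots$: $$k(y(t),u(t))-\bar\psi(y(t))+\bar\eta(f(y(t),u(t)))-\bar\eta(y(t))=V(y_0)-\bar\psi(y_0),\qquad\bar\psi(y(t))=\bar\psi(y_0).$$ Then $u(\cdot)$ is optimal in the long-run average problem, i.e. $$\liminf_{T\to\infty}\frac1T\sum_{t=0}^{T-1}k(y(t),u(t))=\inf_{u'\in\mathcal U(y_0)}\liminf_{T\to\infty}\frac1T\sum_{t=0}^{T-1}k(y'(t),u'(t)),$$ where $y'$ denotes the trajectory generated by $u'$.
   Context: Let $Y\subset\mathbb{R}^m$ be nonempty compact, $U_0$ a compact metric space, $U(\cdot):Y\rightsquigarrow U_0$ upper semicontinuous and compact-valued, and $f:\mathbb{R}^m\times U_0\to\mathbb{R}^m$, $k:\mathbb{R}^m\times U_0\to\mathbb{R}$ continuous. Put $A(y):=\{u\in U(y): f(y,u)\in Y\}$ and $G:=\{(y,u):y\in Y,\ u\in A(y)\}$. Standing assumption: $A(y)\ne\emptyset$ for all $y\in Y$. An admissible process from $y_0$ on $\{0,\dots,T-1\}$ (respectively on $\{0,1,\dots\}$) is a pair $(y(t),u(t))$ with $y(0)=y_0$, $u(t)\in A(y(t))$ and $y(t+1)=f(y(t),u(t))$. The controls form $\mathcal U_T(y_0)$ (respectively $\mathcal U(y_0)$). Define $V_T(y_0):=\frac1T\min_{u\in\mathcal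 U_T(y_0)}\sum_{t=0}^{T-1}k(y(t),u(t))$. Standing assumption of this result: for every $y\in Y$ the limit $V(y):=\lim_{T\to\infty}V_T(y)$ exists, and $V$ is continuous on $Y$. Dual problem: $d^*(y_0):=\sup\mu$, where the supremum is over triples $(\mu,\psi,\eta)\in\mathbb{R}\times C(Y)\times C(Y)$ with, for all $(y,u)\in G$: $$k(y,u)+\psi(y_0)-\psi(y)+\eta(f(y,u))-\eta(y)-\mu\ge0,\qquad\psi(f(y,u))-\psi(y)\ge0.$$ An optimal solution of the dual problem is a pair $(\bar\psi,\bar\eta)\in C(Y)\times C(Y)$ with, for all $(y,u)\in G$: $$k(y,u)+\bar\psi(y_0)-\bar\psi(y)+\bar\eta(f(y,u))-\bar\eta(y)\ge d^*(y_0),\qquad\bar\psi(f(y,u))-\bar\psi(y)\ge0.$$ *)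

theory Defs
  imports "HOL-Analysis.Analysis"
begin

definition usc_on :: "'a::metric_space set \<Rightarrow> ('a \<Rightarrow> 'b::topological_space set) \<Rightarrow> bool" where
  "usc_on Y U \<longleftrightarrow> (\<forall>y\<in>Y. \<forall>W. open W \<and> U y \<subseteq> W \<longrightarrow>
      (\<exists>\<delta>>0. \<forall>y'\<in>Y. dist y' y < \<delta> \<longrightarrow> U y' \<subseteq> W))"

definition adm_set :: "'a set \<Rightarrow> ('a \<Rightarrow> 'b set) \<Rightarrow> ('a \<Rightarrow> 'b \<Rightarrow> 'a) \<Rightarrow> 'a \<Rightarrow> 'b set" where
  "adm_set Y U f y = {u \<in> U y. f y u \<in> Y}"

definition graphG :: "'a set \<Rightarrow> ('a \<Rightarrow> 'b set) \<Rightarrow> ('a \<Rightarrow> 'b \<Rightarrow> 'a) \<Rightarrow> ('a \<times> 'b) set" where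
  "graphG Y U f = {(y, u). y \<in> Y \<and> u \<in> adm_set Y U f y}"

primrec traj :: "('a \<Rightarrow> 'b \<Rightarrow> 'a) \<Rightarrow> 'a \<Rightarrow> (nat \<Rightarrow> 'b) \<Rightarrow> nat \<Rightarrow> 'a" where
  "traj f y0 u 0 = y0"
| "traj f y0 u (Suc t) = f (traj f y0 u t) (u t)"

definition ctrlsT :: "'a set \<Rightarrow> ('a \<Rightarrow> 'b set) \<Rightarrow> ('a \<Rightarrow> 'b \<Rightarrow> 'a) \<Rightarrow> nat \<Rightarrow> 'a \<Rightarrow> (nat \<Rightarrow> 'b) set" where
  "ctrlsT Y U f T y0 = {u. \<forall>t<T. u t \<in> adm_set Y U f (traj f y0 u t)}"

definition ctrls :: "'a set \<Rightarrow> ('a \<Rightarrow> 'b set) \<Rightarrow> ('a \<Rightarrow> 'b \<Rightarrow> 'a) \<Rightarrow> 'a \<Rightarrow> (nat \<Rightarrow> 'b) set" where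
  "ctrls Y U f y0 = {u. \<forall>t. u t \<in> adm_set Y U f (traj f y0 u t)}"

definition VT :: "'a set \<Rightarrow> ('a \<Rightarrow> 'b set) \<Rightarrow> ('a \<Rightarrow> 'b \<Rightarrow> 'a) \<Rightarrow> ('a \<Rightarrow> 'b \<Rightarrow> real) \<Rightarrow> nat \<Rightarrow> 'a \<Rightarrow> real" where
  "VT Y U f k T y0 = (1 / real T) *
     Inf ((\<lambda>u. \<Sum>t<T. k (traj f y0 u t) (u t)) ` ctrlsT Y U f T y0)"

definition Vlim :: "'a set \<Rightarrow> ('a \<Rightarrow> 'b set) \<Rightarrow> ('a \<Rightarrow> 'b \<Rightarrow> 'a) \<Rightarrow> ('a \<Rightarrow> 'b \<Rightarrow> real) \<Rightarrow> 'a \<Rightarrow> real" where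
  "Vlim Y U f k y = lim (\<lambda>T. VT Y U f k T y)"

definition dual_value :: "'a::topological_space set \<Rightarrow> ('a \<Rightarrow> 'b set) \<Rightarrow> ('a \<Rightarrow> 'b \<Rightarrow> 'a) \<Rightarrow> ('a \<Rightarrow> 'b \<Rightarrow> real) \<Rightarrow> 'a \<Rightarrow> real" where
  "dual_value Y U f k y0 = Sup {\<mu>. \<exists>\<psi> \<eta>. continuous_on Y \<psi> \<and> continuous_on Y \<eta> \<and>
      (\<forall>(y, u)\<in>graphG Y U f.
         k y u + \<psi> y0 - \<psi> y + \<eta> (f y u) - \<eta> y - \<mu> \<ge> 0 \<and> \<psi> (f y u) - \<psi> y \<ge> 0)}"

definition dual_optimal :: "'a::topological_space set \<Rightarrow> ('a \<Rightarrow> 'b set) \<Rightarrow> ('a \<Rightarrow> 'b \<Rightarrow> 'a) \<Rightarrow> ('a \<Rightarrow> 'b \<Rightarrow> real) \<Rightarrow> 'a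
     \<Rightarrow> ('a \<Rightarrow> real) \<Rightarrow> ('a \<Rightarrow> real) \<Rightarrow> bool" where
  "dual_optimal Y U f k y0 \<psi> \<eta> \<longleftrightarrow> continuous_on Y \<psi> \<and> continuous_on Y \<eta> \<and>
      (\<forall>(y, u)\<in>graphG Y U f.
         k y u + \<psi> y0 - \<psi> y + \<eta> (f y u) - \<eta> y \<ge> dual_value Y U f k y0 \<and> \<psi> (f y u) - \<psi> y \<ge> 0)"

definition avg_cost :: "('a \<Rightarrow> 'b \<Rightarrow> 'a) \<Rightarrow> ('a \<Rightarrow> 'b \<Rightarrow> real) \<Rightarrow> 'a \<Rightarrow> (nat \<Rightarrow> 'b) \<Rightarrow> ereal" where
  "avg_cost f k y0 u = liminf (\<lambda>T. ereal ((\<Sum>t<T. k (traj f y0 u t) (u t)) / real T))"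

end

theory Submission
  imports Defs
begin

lemma traj_in_Y:
  assumes "y0 \<in> Y" "\<forall>s<T. w s \<in> adm_set Y U f (traj f y0 w s)" "t \<le> T"
  shows "traj f y0 w t \<in> Y"
  using assms(3)
proof (induction t)
  case 0 then show ?case using assms(1) by simp
next
  case (Suc t)
  then have "w t \<in> adm_set Y U f (traj f y0 w t)" using assms(2) by simp
  then show ?case by (simp add: adm_set_def)
qed

theorem proposition4p5:
  fixes Y :: "'a::euclidean_space set"
    and U0 :: "'b::metric_space set"
    and U :: "'a \<Rightarrow> 'b set"
    and f :: "'a \<Rightarrow> 'b \<Rightarrow> 'a"
    and k :: "'a \<Rightarrow> 'b \<Rightarrow> real"
    and y0 :: 'a
    and \<psi> \<eta> :: "'a \<Rightarrow> real"
    and y :: "nat \<Rightarrow> 'a"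
    and u :: "nat \<Rightarrow> 'b"
  assumes Y: "compact Y" "Y \<noteq> {}"
    and U0: "compact U0"
    and U_sub: "\<And>x. x \<in> Y \<Longrightarrow> U x \<subseteq> U0"
    and U_compact: "\<And>x. x \<in> Y \<Longrightarrow> compact (U x)"
    and U_usc: "usc_on Y U"
    and f_cont: "continuous_on (UNIV \<times> U0) (\<lambda>(x, v). f x v)"
    and k_cont: "continuous_on (UNIV \<times> U0) (\<lambda>(x, v). k x v)"
    and A_nonempty: "\<And>x. x \<in> Y \<Longrightarrow> adm_set Y U f x \<noteq> {}"
    and V_conv: "\<And>x. x \<in> Y \<Longrightarrow> convergent (\<lambda>T. VT Y U f k T x)"
    and V_cont: "continuous_on Y (Vlim Y U f k)"
    and y0: "y0 \<in> Y"
    and opt: "dual_optimal Y U f k y0 \<psi> \<eta>"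
    and y_0: "y 0 = y0"
    and u_adm: "\<And>t. u t \<in> adm_set Y U f (y t)"
    and y_step: "\<And>t. y (Suc t) = f (y t) (u t)"
    and cond1: "\<And>t. k (y t) (u t) - \<psi> (y t) + \<eta> (f (y t) (u t)) - \<eta> (y t)
                    = Vlim Y U f k y0 - \<psi> y0"
    and cond2: "\<And>t. \<psi> (y t) = \<psi> y0"
  shows "liminf (\<lambda>T. ereal ((\<Sum>t<T. k (y t) (u t)) / real T))
         = (INF u' \<in> ctrls Y U f y0. avg_cost f k y0 u')"
proof -
  define V where "V = Vlim Y U f k y0"
  have trajeq: "traj f y0 u t = y t" for t
    by (induction t) (simp_all add: y_0 y_step)
  have yY: "y t \<in> Y" for t
  proof (cases t)
    case 0 then show ?thesis using y0 y_0 by simp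
  next
    case (Suc s) then show ?thesis using u_adm[of s] y_step[of s] by (simp add: adm_set_def)
  qed
  have uc: "u \<in> ctrls Y U f y0"
    using u_adm by (simp add: ctrls_def trajeq)
  have step: "k (y t) (u t) = V - \<eta> (y (Suc t)) + \<eta> (y t)" for t
    using cond1[of t] cond2[of t] y_step[of t] by (simp add: V_def)
  have sumeq: "(\<Sum>t<T. k (y t) (u t)) = real T * V - \<eta> (y T) + \<eta> y0" for T
    by (induction T) (simp_all add: step y_0 algebra_simps)
  have "continuous_on Y \<eta>" using opt by (simp add: dual_optimal_def)
  then have "compact (\<eta> ` Y)" using Y(1) by (metis compact_continuous_image)
  then obtain C where C: "\<And>x. x \<in> Y \<Longrightarrow> \<bar>\<eta> x\<bar> \<le> C"
    using compact_imp_bounded bounded_iff by (metis image_eqI real_norm_def)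
  have "compact (Y \<times> U0)" using Y(1) U0 by (rule compact_Times)
  moreover have "continuous_on (Y \<times> U0) (\<lambda>(x, v). k x v)"
    using k_cont by (rule continuous_on_subset) auto
  ultimately have "compact ((\<lambda>(x, v). k x v) ` (Y \<times> U0))"
    by (metis compact_continuous_image)
  then obtain B where B0: "\<And>z. z \<in> (\<lambda>(x, v). k x v) ` (Y \<times> U0) \<Longrightarrow> \<bar>z\<bar> \<le> B"
    using compact_imp_bounded bounded_iff by (metis real_norm_def)
  have B: "\<bar>k x v\<bar> \<le> B" if "x \<in> Y" "v \<in> U0" for x v
    using B0[of "k x v"] that by force
  have lim1: "(\<lambda>T. (\<Sum>t<T. k (y t) (u t)) / real T) \<longlonglongrightarrow> V"
  proof -
    have "(\<lambda>T. (\<eta> y0 - \<eta> (y T)) / real T) \<longlonglongrightarrow> 0"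
    proof (rule Lim_null_comparison)
      show "\<forall>\<^sub>F T in sequentially. norm ((\<eta> y0 - \<eta> (y T)) / real T) \<le> 2 * C / real T"
      proof (rule always_eventually, rule allI)
        fix T
        have "\<bar>\<eta> y0 - \<eta> (y T)\<bar> \<le> 2 * C" using C[OF y0] C[OF yY[of T]] by linarith
        then show "norm ((\<eta> y0 - \<eta> (y T)) / real T) \<le> 2 * C / real T"
          by (simp add: divide_right_mono)
      qed
      show "(\<lambda>T. 2 * C / real T) \<longlonglongrightarrow> 0" by (rule lim_const_over_n)
    qed
    then have "(\<lambda>T. V + (\<eta> y0 - \<eta> (y T)) / real T) \<longlonglongrightarrow> V + 0"
      by (intro tendsto_add tendsto_const)
    then have "(\<lambda>T. V + (\<eta> y0 - \<eta> (y T)) / real T) \<longlonglongrightarrow> V" by simp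
    moreover have "\<forall>\<^sub>F T in sequentially. V + (\<eta> y0 - \<eta> (y T)) / real T
                     = (\<Sum>t<T. k (y t) (u t)) / real T"
      using eventually_gt_at_top[of "0::nat"]
      by eventually_elim (simp add: sumeq field_simps)
    ultimately show ?thesis by (rule Lim_transform_eventually)
  qed
  have L: "liminf (\<lambda>T. ereal ((\<Sum>t<T. k (y t) (u t)) / real T)) = ereal V"
    by (rule lim_imp_Liminf) (simp_all add: lim1)
  have VTlim: "(\<lambda>T. VT Y U f k T y0) \<longlonglongrightarrow> V"
    using V_conv[OF y0] by (simp add: V_def Vlim_def convergent_LIMSEQ_iff)
  have lower: "ereal V \<le> avg_cost f k y0 w" if w: "w \<in> ctrls Y U f y0" for w
  proof -
    have le: "VT Y U f k T y0 \<le> (\<Sum>t<T. k (traj f y0 w t) (w t)) / real T" if "T > 0" for T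
    proof -
      let ?S = "(\<lambda>w. \<Sum>t<T. k (traj f y0 w t) (w t)) ` ctrlsT Y U f T y0"
      have wT: "w \<in> ctrlsT Y U f T y0" using w by (simp add: ctrls_def ctrlsT_def)
      have "bdd_below ?S"
      proof (rule bdd_belowI[of _ "- (real T * B)"])
        fix z assume "z \<in> ?S"
        then obtain w' where w': "w' \<in> ctrlsT Y U f T y0"
          and z: "z = (\<Sum>t<T. k (traj f y0 w' t) (w' t))" by auto
        have "\<And>t. t \<in> {..<T} \<Longrightarrow> - B \<le> k (traj f y0 w' t) (w' t)"
        proof -
          fix t assume t: "t \<in> {..<T}"
          have adm: "\<forall>s<T. w' s \<in> adm_set Y U f (traj f y0 w' s)"
            using w' by (simp add: ctrlsT_def)
          have tY: "traj f y0 w' t \<in> Y" using traj_in_Y[OF y0 adm] t by simp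
          have "w' t \<in> U0" using adm t U_sub[OF tY] by (auto simp: adm_set_def)
          then show "- B \<le> k (traj f y0 w' t) (w' t)" using B[OF tY, of "w' t"] by linarith
        qed
        then have "(\<Sum>t<T. - B) \<le> z" unfolding z by (rule sum_mono)
        then show "- (real T * B) \<le> z" by simp
      qed
      then have "Inf ?S \<le> (\<Sum>t<T. k (traj f y0 w t) (w t))"
        using wT by (intro cInf_lower) auto
      then show ?thesis using that
        by (simp add: VT_def field_simps)
    qed
    have "liminf (\<lambda>T. ereal (VT Y U f k T y0)) \<le> avg_cost f k y0 w"
      unfolding avg_cost_def
      by (rule Liminf_mono)
         (use eventually_gt_at_top[of "0::nat"] in \<open>eventually_elim, simp add: le\<close>)
    moreover have "liminf (\<lambda>T. ereal (VT Y U f k T y0)) = ereal V"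
      by (rule lim_imp_Liminf) (simp_all add: VTlim)
    ultimately show ?thesis by simp
  qed
  have "(INF u' \<in> ctrls Y U f y0. avg_cost f k y0 u') = ereal V"
  proof (rule antisym)
    have "(INF u' \<in> ctrls Y U f y0. avg_cost f k y0 u') \<le> avg_cost f k y0 u"
      using uc by (rule INF_lower)
    also have "\<dots> = ereal V" using L by (simp add: avg_cost_def trajeq)
    finally show "(INF u' \<in> ctrls Y U f y0. avg_cost f k y0 u') \<le> ereal V" .
    show "ereal V \<le> (INF u' \<in> ctrls Y U f y0. avg_cost f k y0 u')"
      using lower by (rule INF_greatest)
  qed
  then show ?thesis using L by simp
qed

end
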